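(* Let $\mathcal{T}$ be a single-elimination tournament with at least $2$ vertices and $u\in V(\mathcal{T})$. If there is no $x\in N^+(u)$ with $N^-(x)=\{a,u\}$ for some player $a\in P(\mathcal{T})$, then there exists a partition $\mathcal{A}$ of $P(\mathcal{T})\setminus P(u)$ such that: (i) for all $A\in\mathcal{A}$ and $a\in A$, there exists $b\in A\setminus\{a\}$ such that $b\in P(x)$ for every match $x$ with $a\in P(x)$; and (ii) $|\mathcal{A}|=\sum_{x\in M(\mathcal{T})\setminus V(\mathcal{T}_u)}\left\lfloor \frac{|N^-(x)\cap (P(\mathcal{T})\setminus P(u))|}{2}\right\rfloor$.
   Context: A single-elimination tournament is a finite directed graph $\mathcal{T}$ such that: (a) $\mathcal{T}$ has exactly one sink (vertex with no out-neighbours); (b) every non-sink vertex has exactly one out-neighbour; (c) $\mathcal{T}$ has no directed cycles; (d) $|N^-(v)|\ne 1$ for every vertex $v$, where $N^-(v)$ (resp. $N^+(v)$) denotes the set of in-neighbours (resp. out-neighbours) of $v$. The players $P(\mathcal{T})$ are the sources and the matches are $M(\mathcal{T})=V(\mathcal{T})\setminus P(\mathcal{T})$. For a vertex $u$, $P(u)$ is the set of players $a$ for which there is a directed walk from $a$ to $u$ (length $0$ allowed). For $u\in V(\mathcal{T})$, $\mathcal{T}_u$ is the digraph obtained from $\mathcal{T}$ by deleting every vertex $v$ with $P(v)\not\subseteq P(u)$. *)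

theory Defs
  imports Main "HOL-Library.Disjoint_Sets"
begin

definition out_nbrs :: "('a \<times> 'a) set \<Rightarrow> 'a \<Rightarrow> 'a set" where
  "out_nbrs E v = {w. (v, w) \<in> E}"

definition in_nbrs :: "('a \<times> 'a) set \<Rightarrow> 'a \<Rightarrow> 'a set" where
  "in_nbrs E v = {w. (w, v) \<in> E}"

definition se_tournament :: "'a set \<Rightarrow> ('a \<times> 'a) set \<Rightarrow> bool" where
  "se_tournament V E \<longleftrightarrow>
     finite V \<and> E \<subseteq> V \<times> V \<and>
     (\<exists>!s. s \<in> V \<and> out_nbrs E s = {}) \<and>
     (\<forall>v\<in>V. out_nbrs E v \<noteq> {} \<longrightarrow> (\<exists>!w. w \<in> out_nbrs E v)) \<and>
     acyclic E \<and>
     (\<forall>v\<in>V. card (in_nbrs E v) \<noteq> 1)"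

definition players :: "'a set \<Rightarrow> ('a \<times> 'a) set \<Rightarrow> 'a set" where
  "players V E = {v \<in> V. in_nbrs E v = {}}"

definition matches :: "'a set \<Rightarrow> ('a \<times> 'a) set \<Rightarrow> 'a set" where
  "matches V E = V - players V E"

definition playersOf :: "'a set \<Rightarrow> ('a \<times> 'a) set \<Rightarrow> 'a \<Rightarrow> 'a set" where
  "playersOf V E u = {a \<in> players V E. (a, u) \<in> E\<^sup>*}"

text \<open>Vertex set of the subtournament T_u.\<close>
definition sub_vertices :: "'a set \<Rightarrow> ('a \<times> 'a) set \<Rightarrow> 'a \<Rightarrow> 'a set" where
  "sub_vertices V E u = {v \<in> V. playersOf V E v \<subseteq> playersOf V E u}"

end

theory Submission
  imports Defs
begin

lemma pairs_partition:
  "finite S \<Longrightarrow> card S \<noteq> 1 \<Longrightarrow> \<exists>Q. partition_on S Q \<and> card Q = card S div 2 \<and> (\<forall>B\<in>Q. 2 \<le> card B)"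
proof (induction "card S" arbitrary: S rule: less_induct)
  case less
  show ?case
  proof (cases "card S < 4")
    case True
    show ?thesis
    proof (cases "card S = 0")
      case True
      then have "S = {}" using less.prems by auto
      then show ?thesis using True by (auto simp: partition_on_empty)
    next
      case False
      then have "S \<noteq> {}" by auto
      have "card S = 2 \<or> card S = 3" using False less.prems \<open>card S < 4\<close> by linarith
      note this \<open>S \<noteq> {}\<close>
      then show ?thesis by (intro exI[of _ "{S}"]) (auto simp: partition_on_space)
    qed
  next
    case False
    then obtain p where p: "p \<in> S" by fastforce
    have "card (S - {p}) \<ge> 3" using False p less.prems by auto
    then have "S - {p} \<noteq> {}" by fastforce
    then obtain q where q: "q \<in> S - {p}" by blast
    define S' where "S' = S - {p, q}"
    have cS': "card S' = card S - 2" using p q less.prems unfolding S'_def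
      by (subst card_Diff_subset) auto
    have "finite S'" using less.prems S'_def by auto
    obtain Q' where Q': "partition_on S' Q'" "card Q' = card S' div 2" "\<forall>B\<in>Q'. 2 \<le> card B"
    proof -
      have "card S' < card S" "card S' \<noteq> 1" using cS' False by linarith+
      then show ?thesis using less.hyps[of S'] \<open>finite S'\<close> that by blast
    qed
    have UQ: "\<Union>Q' = S'" using partition_onD1[OF Q'(1)] by simp
    have disj: "disjnt {p,q} (\<Union>Q')" unfolding UQ S'_def by (auto simp: disjnt_def)
    have "S - {p,q} = S'" by (simp add: S'_def)
    then have "partition_on (S - {p,q}) Q'" using Q'(1) by simp
    then have "partition_on S (insert {p,q} Q')"
      using partition_on_insert[OF disj] p q by auto
    moreover have "{p,q} \<notin> Q'" using disj partition_onD3[OF Q'(1)] by (auto simp: disjnt_def)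
    moreover have "finite Q'" using finite_elements[OF \<open>finite S'\<close> Q'(1)] .
    moreover have "card {p,q} = 2" using q by auto
    ultimately show ?thesis using Q' cS' False
      by (intro exI[of _ "insert {p,q} Q'"]) auto
  qed
qed

locale tourn =
  fixes V :: "'a set" and E :: "('a \<times> 'a) set"
  assumes T: "se_tournament V E"
begin

lemma finV: "finite V" and EV: "E \<subseteq> V \<times> V" and acyc: "acyclic E"
  and indeg: "v \<in> V \<Longrightarrow> card (in_nbrs E v) \<noteq> 1"
  using T unfolding se_tournament_def by auto

lemma det: "(x,y) \<in> E \<Longrightarrow> (x,z) \<in> E \<Longrightarrow> y = z"
proof -
  assume a: "(x,y) \<in> E" "(x,z) \<in> E"
  then have "x \<in> V" "out_nbrs E x \<noteq> {}" using EV by (auto simp: out_nbrs_def)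
  then have "\<exists>!w. w \<in> out_nbrs E x" using T unfolding se_tournament_def by blast
  then show "y = z" using a by (auto simp: out_nbrs_def)
qed

lemma EV': "(x,y) \<in> E \<Longrightarrow> x \<in> V \<and> y \<in> V" using EV by blast

lemma finE: "finite E" using finV EV finite_subset by blast

lemma wfE: "wf E" using finE acyc finite_acyclic_wf by blast

lemma wfE': "wf (E\<inverse>)" using finE acyc finite_acyclic_wf_converse by blast

lemma comp: "(c,x) \<in> E\<^sup>* \<Longrightarrow> (c,y) \<in> E\<^sup>* \<Longrightarrow> (x,y) \<in> E\<^sup>* \<or> (y,x) \<in> E\<^sup>*"
proof (induction rule: converse_rtrancl_induct)
  case base
  then show ?case by simp
next
  case (step c c')
  show ?case
  proof (cases "c = y")
    case True
    then show ?thesis using step by (meson converse_rtrancl_into_rtrancl)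
  next
    case False
    then have "(c,y) \<in> E\<^sup>+" using step.prems by (simp add: rtrancl_eq_or_trancl)
    then obtain c'' where "(c,c'') \<in> E" "(c'',y) \<in> E\<^sup>*" using tranclD by metis
    then have "c'' = c'" using det step.hyps(1) by blast
    then show ?thesis using step.IH \<open>(c'',y) \<in> E\<^sup>*\<close> by blast
  qed
qed

lemma outstep: "(x,y) \<in> E \<Longrightarrow> (x,z) \<in> E\<^sup>+ \<Longrightarrow> (y,z) \<in> E\<^sup>*"
  using det tranclD by metis

lemma nocyc: "(x,y) \<in> E\<^sup>+ \<Longrightarrow> (y,x) \<in> E\<^sup>* \<Longrightarrow> False"
  using acyc unfolding acyclic_def by (meson rtrancl_trancl_trancl)

lemma has_player: "v \<in> V \<Longrightarrow> \<exists>c \<in> players V E. (c,v) \<in> E\<^sup>*"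
proof (induction v rule: wf_induct_rule[OF wfE])
  case (1 v)
  show ?case
  proof (cases "in_nbrs E v = {}")
    case True
    then show ?thesis using 1 by (auto simp: players_def)
  next
    case False
    then obtain y where y: "(y,v) \<in> E" by (auto simp: in_nbrs_def)
    then have "y \<in> V" using EV' by blast
    then obtain c where "c \<in> players V E" "(c,y) \<in> E\<^sup>*" using 1 y by blast
    then show ?thesis using y by (meson rtrancl.rtrancl_into_rtrancl)
  qed
qed

lemma in_nbrs_fin: "finite (in_nbrs E v)"
proof -
  have "in_nbrs E v \<subseteq> V" using EV by (auto simp: in_nbrs_def)
  then show ?thesis using finV finite_subset by blast
qed

lemma other_in:
  assumes yw: "(y,w) \<in> E" shows "\<exists>y'. (y',w) \<in> E \<and> y' \<noteq> y"
proof -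
  have wV: "w \<in> V" using yw EV by blast
  have "card (in_nbrs E w) \<noteq> 1" using indeg wV .
  moreover have yi: "y \<in> in_nbrs E w" using yw by (simp add: in_nbrs_def)
  ultimately have "in_nbrs E w \<noteq> {y}" by auto
  then show ?thesis using yi by (auto simp: in_nbrs_def)
qed

lemma strict: "(u,w) \<in> E\<^sup>+ \<Longrightarrow> \<exists>c \<in> playersOf V E w. c \<notin> playersOf V E u"
proof -
  assume uw: "(u,w) \<in> E\<^sup>+"
  then obtain y where y: "(u,y) \<in> E\<^sup>*" "(y,w) \<in> E" using tranclD2 by metis
  obtain y' where y': "(y',w) \<in> E" "y' \<noteq> y" using other_in[OF y(2)] by blast
  then have "y' \<in> V" using EV' by blast
  then have "\<exists>c \<in> players V E. (c,y') \<in> E\<^sup>*" by (rule has_player)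
  then obtain c where c: "c \<in> players V E" "(c,y') \<in> E\<^sup>*" by blast
  have "(c,w) \<in> E\<^sup>*" using c(2) y'(1) by (rule rtrancl_into_rtrancl)
  then have cw: "c \<in> playersOf V E w" using c(1) by (simp add: playersOf_def)
  have "c \<notin> playersOf V E u"
  proof
    assume "c \<in> playersOf V E u"
    then have "(c,u) \<in> E\<^sup>*" by (auto simp: playersOf_def)
    then have "(c,y) \<in> E\<^sup>*" using y by auto
    then have "(y,y') \<in> E\<^sup>* \<or> (y',y) \<in> E\<^sup>*" using comp c(2) by blast
    then show False
    proof
      assume "(y,y') \<in> E\<^sup>*"
      then have "(y,y') \<in> E\<^sup>+" using y' by (simp add: rtrancl_eq_or_trancl)
      then have "(w,y') \<in> E\<^sup>*" using outstep y(2) by blast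
      then show False using nocyc y'(1) by blast
    next
      assume "(y',y) \<in> E\<^sup>*"
      then have "(y',y) \<in> E\<^sup>+" using y' by (simp add: rtrancl_eq_or_trancl)
      then have "(w,y) \<in> E\<^sup>*" using outstep y'(1) by blast
      then show False using nocyc y(2) by blast
    qed
  qed
  then show ?thesis using cw by blast
qed

end


locale tourn2 = tourn +
  fixes u :: 'a
  assumes uV: "u \<in> V"
    and H: "\<not> (\<exists>x \<in> out_nbrs E u. \<exists>a \<in> players V E. in_nbrs E x = {a, u})"
begin

definition Dset where "Dset = players V E - playersOf V E u"
definition Cset where "Cset x = in_nbrs E x \<inter> Dset"

lemma noin: "a \<in> players V E \<Longrightarrow> (c,a) \<in> E\<^sup>* \<Longrightarrow> c = a"
proof (rule ccontr)
  assume a: "a \<in> players V E" "(c,a) \<in> E\<^sup>*" "c \<noteq> a"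
  then have "(c,a) \<in> E\<^sup>+" by (simp add: rtrancl_eq_or_trancl)
  then obtain z where "(z,a) \<in> E" using tranclD2 by metis
  then show False using a(1) by (auto simp: players_def in_nbrs_def)
qed

lemma P_player: "a \<in> players V E \<Longrightarrow> playersOf V E a = {a}"
  using noin by (auto simp: playersOf_def)

lemma P_mono: "(x,y) \<in> E\<^sup>* \<Longrightarrow> playersOf V E x \<subseteq> playersOf V E y"
  by (auto simp: playersOf_def)

lemma edge_P: "b \<in> players V E \<Longrightarrow> (b,x) \<in> E \<Longrightarrow> b \<in> playersOf V E x"
  by (auto simp: playersOf_def)

lemma Cfin: "finite (Cset x)" using in_nbrs_fin by (auto simp: Cset_def)

lemma L: "v \<in> matches V E \<Longrightarrow> \<not> playersOf V E v \<subseteq> playersOf V E u \<Longrightarrow>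
   \<exists>x. (x,v) \<in> E\<^sup>* \<and> 2 \<le> card (Cset x)"
proof (induction v rule: wf_induct_rule[OF wfE])
  case (1 v)
  have vV: "v \<in> V" and inne: "in_nbrs E v \<noteq> {}" using 1(2) by (auto simp: matches_def players_def)
  show ?case
  proof (cases "2 \<le> card (Cset v)")
    case True
    then show ?thesis by blast
  next
    case c1: False
    show ?thesis
    proof (cases "\<exists>w. (w,v) \<in> E \<and> w \<in> matches V E \<and> \<not> playersOf V E w \<subseteq> playersOf V E u")
      case True
      then obtain w where w: "(w,v) \<in> E" "w \<in> matches V E" "\<not> playersOf V E w \<subseteq> playersOf V E u"
        by blast
      then obtain x where "(x,w) \<in> E\<^sup>*" "2 \<le> card (Cset x)" using 1(1) by blast
      then show ?thesis using w(1) by (meson rtrancl.rtrancl_into_rtrancl)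
    next
      case c2: False
      have sub: "in_nbrs E v \<subseteq> Cset v \<union> {u}"
      proof
        fix w assume wi: "w \<in> in_nbrs E v"
        then have wv: "(w,v) \<in> E" by (auto simp: in_nbrs_def)
        then have wV: "w \<in> V" using EV' by blast
        show "w \<in> Cset v \<union> {u}"
        proof (cases "playersOf V E w \<subseteq> playersOf V E u")
          case False
          then have "w \<notin> matches V E" using c2 wv by blast
          then have wp: "w \<in> players V E" using wV by (auto simp: matches_def)
          then have "w \<notin> playersOf V E u" using False P_player by auto
          then show ?thesis using wp wi by (auto simp: Cset_def Dset_def)
        next
          case True
          have "\<exists>c \<in> players V E. (c,w) \<in> E\<^sup>*" using wV by (rule has_player)
          then obtain c where c: "c \<in> players V E" "(c,w) \<in> E\<^sup>*" by blast
          then have "c \<in> playersOf V E w" by (auto simp: playersOf_def)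
          then have "(c,u) \<in> E\<^sup>*" using True by (auto simp: playersOf_def)
          then have "(w,u) \<in> E\<^sup>* \<or> (u,w) \<in> E\<^sup>*" using comp c(2) by blast
          then show ?thesis
          proof
            assume a: "(w,u) \<in> E\<^sup>*"
            show ?thesis
            proof (cases "w = u")
              case False
              then have "(w,u) \<in> E\<^sup>+" using a by (simp add: rtrancl_eq_or_trancl)
              then have "(v,u) \<in> E\<^sup>*" using outstep wv by blast
              then show ?thesis using P_mono 1(3) by blast
            qed simp
          next
            assume a: "(u,w) \<in> E\<^sup>*"
            show ?thesis
            proof (cases "w = u")
              case False
              then have "(u,w) \<in> E\<^sup>+" using a by (simp add: rtrancl_eq_or_trancl)
              then show ?thesis using strict True by blast
            qed simp
          qed
        qed
      qed
      have "card (in_nbrs E v) \<noteq> 0" using inne in_nbrs_fin by simp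
      then have ci: "card (in_nbrs E v) \<ge> 2" using indeg[OF vV] by linarith
      have "card (Cset v) \<le> 1" using c1 by simp
      show ?thesis
      proof (cases "Cset v = {}")
        case True
        then have "card (in_nbrs E v) \<le> card {u}" using sub by (intro card_mono) auto
        then show ?thesis using ci by simp
      next
        case False
        then have "card (Cset v) \<noteq> 0" using Cfin by simp
        then have "card (Cset v) = 1" using \<open>card (Cset v) \<le> 1\<close> by linarith
        then obtain a where Ca: "Cset v = {a}" by (rule card_1_singletonE)
        have "u \<in> in_nbrs E v"
        proof (rule ccontr)
          assume "u \<notin> in_nbrs E v"
          then have "in_nbrs E v \<subseteq> {a}" using sub Ca by auto
          then have "card (in_nbrs E v) \<le> card {a}" by (intro card_mono) auto
          then show False using ci by simp
        qed
        moreover have "a \<in> in_nbrs E v" "a \<in> players V E" using Ca by (auto simp: Cset_def Dset_def)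
        ultimately have "in_nbrs E v = {a,u}" using sub Ca by auto
        moreover have "v \<in> out_nbrs E u" using \<open>u \<in> in_nbrs E v\<close> by (auto simp: in_nbrs_def out_nbrs_def)
        ultimately show ?thesis using H \<open>a \<in> players V E\<close> by blast
      qed
    qed
  qed
qed


lemma reach_sink: "s \<in> V \<Longrightarrow> out_nbrs E s = {} \<Longrightarrow> v \<in> V \<Longrightarrow> (v,s) \<in> E\<^sup>*"
proof (induction v rule: wf_induct_rule[OF wfE'])
  case (1 v)
  show ?case
  proof (cases "out_nbrs E v = {}")
    case True
    then have "v = s" using T 1 unfolding se_tournament_def by blast
    then show ?thesis by simp
  next
    case False
    then obtain y where y: "(v,y) \<in> E" by (auto simp: out_nbrs_def)
    then have "y \<in> V" using EV' by blast
    then have "(y,s) \<in> E\<^sup>*" using 1 y by auto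
    then show ?thesis using y by (meson converse_rtrancl_into_rtrancl)
  qed
qed

definition par where "par a = (THE w. (a,w) \<in> E)"

lemma par_eq: "(a,w) \<in> E \<Longrightarrow> par a = w"
  unfolding par_def using det by blast

context
  assumes cV: "card V \<ge> 2"
begin

lemma nonsink: "a \<in> players V E \<Longrightarrow> (a, par a) \<in> E"
proof -
  assume ap: "a \<in> players V E"
  have "\<exists>w. (a,w) \<in> E"
  proof (rule ccontr)
    assume "\<not> (\<exists>w. (a,w) \<in> E)"
    then have os: "out_nbrs E a = {}" by (auto simp: out_nbrs_def)
    have aV: "a \<in> V" using ap by (auto simp: players_def)
    have "\<not> V \<subseteq> {a}" using cV card_mono[of "{a}" V] by auto
    then obtain v where v: "v \<in> V" "v \<noteq> a" by blast
    then have "(v,a) \<in> E\<^sup>*" using reach_sink aV os by blast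
    then show False using noin ap v(2) by blast
  qed
  then show ?thesis using par_eq by blast
qed

definition Q where "Q x = (SOME Q. partition_on (Cset x) Q \<and> card Q = card (Cset x) div 2 \<and> (\<forall>B\<in>Q. 2 \<le> card B))"

lemma Q_prop: "card (Cset x) \<noteq> 1 \<Longrightarrow> partition_on (Cset x) (Q x) \<and> card (Q x) = card (Cset x) div 2 \<and> (\<forall>B\<in>Q x. 2 \<le> card B)"
  unfolding Q_def by (rule someI_ex) (use pairs_partition Cfin in blast)

definition blk where "blk a = (THE B. B \<in> Q (par a) \<and> a \<in> B)"

lemma blk_eq: "card (Cset x) \<noteq> 1 \<Longrightarrow> B \<in> Q x \<Longrightarrow> a \<in> B \<Longrightarrow> par a = x \<Longrightarrow> blk a = B"
proof -
  assume a: "card (Cset x) \<noteq> 1" "B \<in> Q x" "a \<in> B" "par a = x"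
  have dj: "disjoint (Q x)" using Q_prop[OF a(1)] partition_onD2 by blast
  show ?thesis unfolding blk_def a(4)
  proof (rule the_equality)
    fix B' assume "B' \<in> Q x \<and> a \<in> B'"
    then show "B' = B" using dj a by (auto simp: pairwise_def disjnt_def)
  qed (use a in auto)
qed

lemma Dfacts: "a \<in> Dset \<Longrightarrow> (a, par a) \<in> E \<and> a \<in> Cset (par a) \<and> par a \<in> matches V E - sub_vertices V E u
   \<and> a \<in> playersOf V E (par a)"
proof -
  assume aD: "a \<in> Dset"
  then have ap: "a \<in> players V E" "a \<notin> playersOf V E u" by (auto simp: Dset_def)
  have e: "(a, par a) \<in> E" using nonsink ap by blast
  have "a \<in> playersOf V E (par a)" using edge_P ap e by blast
  moreover have "par a \<in> V" using e EV' by blast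
  moreover have "par a \<notin> players V E" using e by (auto simp: players_def in_nbrs_def)
  ultimately show ?thesis using e aD ap
    by (auto simp: Cset_def in_nbrs_def matches_def sub_vertices_def)
qed

lemma blk_mem: "a \<in> Dset \<Longrightarrow> 2 \<le> card (Cset (par a)) \<Longrightarrow> blk a \<in> Q (par a) \<and> a \<in> blk a"
proof -
  assume a: "a \<in> Dset" "2 \<le> card (Cset (par a))"
  then have n1: "card (Cset (par a)) \<noteq> 1" by simp
  have "a \<in> \<Union>(Q (par a))" using Q_prop[OF n1] partition_onD1 Dfacts[OF a(1)] by blast
  then obtain B where "B \<in> Q (par a)" "a \<in> B" by blast
  then show ?thesis using blk_eq[OF n1] by auto
qed

definition rep where "rep a = (SOME b. \<exists>x. (x, par a) \<in> E\<^sup>* \<and> 2 \<le> card (Cset x) \<and> b \<in> Cset x)"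

definition h where "h a = (if 2 \<le> card (Cset (par a)) then blk a else blk (rep a))"

lemma K: "a \<in> Dset \<Longrightarrow> \<exists>b\<in>Dset. b \<noteq> a \<and> b \<in> playersOf V E (par a) \<and> h b = h a \<and> 2 \<le> card (Cset (par b))"
proof -
  assume aD: "a \<in> Dset"
  note F = Dfacts[OF aD]
  define w where "w = par a"
  show ?thesis
  proof (cases "2 \<le> card (Cset w)")
    case True
    have n1: "card (Cset w) \<noteq> 1" using True by simp
    obtain B where B: "B = blk a" by blast
    have Bm: "B \<in> Q w" "a \<in> B" using blk_mem aD True B w_def by auto
    have "2 \<le> card B" using Q_prop[OF n1] Bm by blast
    then have "\<not> B \<subseteq> {a}" using card_mono[of "{a}" B] by auto
    then obtain b where b: "b \<in> B" "b \<noteq> a" by blast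
    have "b \<in> Cset w" using Q_prop[OF n1] partition_onD1 Bm b by blast
    then have bD: "b \<in> Dset" and bw: "(b,w) \<in> E" by (auto simp: Cset_def in_nbrs_def)
    then have pb: "par b = w" using par_eq by blast
    have "h b = B" using blk_eq[OF n1 Bm(1) b(1) pb] pb True by (simp add: h_def)
    moreover have "h a = B" using B True w_def by (simp add: h_def)
    moreover have "b \<in> playersOf V E w" using edge_P bD bw by (auto simp: Dset_def)
    ultimately show ?thesis using bD b(2) pb True w_def by auto
  next
    case False
    have "\<not> playersOf V E w \<subseteq> playersOf V E u" using F aD w_def by (auto simp: Dset_def)
    then obtain x where x: "(x,w) \<in> E\<^sup>*" "2 \<le> card (Cset x)" using L F w_def by blast
    then have "Cset x \<noteq> {}" by auto
    then have "\<exists>b. \<exists>x. (x, par a) \<in> E\<^sup>* \<and> 2 \<le> card (Cset x) \<and> b \<in> Cset x" using x w_def by blast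
    then have "\<exists>x. (x, par a) \<in> E\<^sup>* \<and> 2 \<le> card (Cset x) \<and> rep a \<in> Cset x"
      unfolding rep_def by (rule someI_ex)
    then obtain x' where x': "(x', w) \<in> E\<^sup>*" "2 \<le> card (Cset x')" "rep a \<in> Cset x'"
      unfolding w_def by blast
    define b where "b = rep a"
    have bD: "b \<in> Dset" and bx: "(b,x') \<in> E" using x' b_def by (auto simp: Cset_def in_nbrs_def)
    then have pb: "par b = x'" using par_eq by blast
    have "h b = blk b" using pb x' by (simp add: h_def)
    moreover have "h a = blk b" using False w_def b_def by (simp add: h_def)
    moreover have "b \<noteq> a" using pb x'(2) False w_def by auto
    moreover have "b \<in> playersOf V E w"
    proof -
      have "b \<in> playersOf V E x'" using edge_P bD bx by (auto simp: Dset_def)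
      then show ?thesis using P_mono[OF x'(1)] by blast
    qed
    ultimately show ?thesis using bD pb x' w_def by auto
  qed
qed


definition fib where "fib i = {a \<in> Dset. h a = i}"

lemma main: "\<exists>\<A>. partition_on Dset \<A> \<and>
           (\<forall>A \<in> \<A>. \<forall>a \<in> A. \<exists>b \<in> A - {a}.
               \<forall>x \<in> matches V E. a \<in> playersOf V E x \<longrightarrow> b \<in> playersOf V E x) \<and>
           card \<A> = (\<Sum>x \<in> matches V E - sub_vertices V E u. card (Cset x) div 2)"
proof (intro exI conjI)
  define A where "A = fib ` (h ` Dset)"
  show "partition_on Dset A"
  proof (rule partition_onI)
    show "\<Union>A = Dset" unfolding A_def fib_def by auto
  next
    fix p q assume "p \<in> A" "q \<in> A" "p \<noteq> q"
    then show "disjnt p q" unfolding A_def fib_def disjnt_def by auto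
  next
    show "{} \<notin> A" unfolding A_def fib_def by auto
  qed
  show "\<forall>B \<in> A. \<forall>a \<in> B. \<exists>b \<in> B - {a}.
               \<forall>x \<in> matches V E. a \<in> playersOf V E x \<longrightarrow> b \<in> playersOf V E x"
  proof (intro ballI)
    fix B a assume B: "B \<in> A" and aB: "a \<in> B"
    then obtain a0 where B0: "B = fib (h a0)" unfolding A_def by auto
    then have aD: "a \<in> Dset" and ha: "h a = h a0" using aB unfolding fib_def by auto
    obtain b where b: "b \<in> Dset" "b \<noteq> a" "b \<in> playersOf V E (par a)" "h b = h a"
      using K[OF aD] by blast
    have "b \<in> B - {a}" using b ha B0 unfolding fib_def by auto
    moreover have "\<forall>x \<in> matches V E. a \<in> playersOf V E x \<longrightarrow> b \<in> playersOf V E x"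
    proof (intro ballI impI)
      fix x assume xm: "x \<in> matches V E" and ax: "a \<in> playersOf V E x"
      then have "(a,x) \<in> E\<^sup>*" by (auto simp: playersOf_def)
      moreover have "a \<noteq> x" using xm aD by (auto simp: matches_def Dset_def)
      ultimately have "(a,x) \<in> E\<^sup>+" by (simp add: rtrancl_eq_or_trancl)
      then have "(par a, x) \<in> E\<^sup>*" using outstep Dfacts[OF aD] by blast
      then show "b \<in> playersOf V E x" using P_mono b(3) by blast
    qed
    ultimately show "\<exists>b \<in> B - {a}. \<forall>x \<in> matches V E. a \<in> playersOf V E x \<longrightarrow> b \<in> playersOf V E x"
      by blast
  qed
  define S where "S = matches V E - sub_vertices V E u"
  define S' where "S' = {x \<in> S. 2 \<le> card (Cset x)}"
  have finS: "finite S" unfolding S_def matches_def using finV by auto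
  have finS': "finite S'" using finS unfolding S'_def by auto
  have inj: "inj_on fib (h ` Dset)"
  proof (rule inj_onI)
    fix i j assume "i \<in> h ` Dset" "j \<in> h ` Dset" "fib i = fib j"
    then show "i = j" unfolding fib_def by blast
  qed
  have img: "h ` Dset = \<Union>(Q ` S')"
  proof
    show "h ` Dset \<subseteq> \<Union>(Q ` S')"
    proof
      fix i assume "i \<in> h ` Dset"
      then obtain a where aD: "a \<in> Dset" and i: "i = h a" by blast
      obtain b where b: "b \<in> Dset" "h b = h a" "2 \<le> card (Cset (par b))" using K[OF aD] by blast
      have "h b = blk b" using b(3) by (simp add: h_def)
      moreover have "blk b \<in> Q (par b)" using blk_mem b by blast
      moreover have "par b \<in> S'" using Dfacts[OF b(1)] b(3) unfolding S'_def S_def by blast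
      ultimately show "i \<in> \<Union>(Q ` S')" using i b(2) by auto
    qed
  next
    show "\<Union>(Q ` S') \<subseteq> h ` Dset"
    proof
      fix B assume "B \<in> \<Union>(Q ` S')"
      then obtain x where x: "x \<in> S'" "B \<in> Q x" by blast
      have n1: "card (Cset x) \<noteq> 1" and c2: "2 \<le> card (Cset x)" using x(1) unfolding S'_def by auto
      note QP = Q_prop[OF n1]
      have "B \<noteq> {}" using QP partition_onD3 x(2) by metis
      then obtain b where bB: "b \<in> B" by blast
      have "B \<subseteq> Cset x" using QP partition_onD1 x(2) by blast
      then have bC: "b \<in> Cset x" using bB by blast
      then have bD: "b \<in> Dset" and bx: "(b,x) \<in> E" by (auto simp: Cset_def in_nbrs_def)
      from bx have pb: "par b = x" by (rule par_eq)
      have "h b = B" using blk_eq[OF n1 x(2) bB pb] pb c2 by (simp add: h_def)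
      then show "B \<in> h ` Dset" using bD by blast
    qed
  qed
  have cardU: "card (\<Union>(Q ` S')) = (\<Sum>x\<in>S'. card (Q x))"
  proof (rule card_UN_disjoint[OF finS'])
    show "\<forall>x\<in>S'. finite (Q x)"
    proof
      fix x assume "x \<in> S'"
      then have "card (Cset x) \<noteq> 1" unfolding S'_def by auto
      then show "finite (Q x)" using Q_prop finite_elements[OF Cfin] by blast
    qed
    show "\<forall>x\<in>S'. \<forall>y\<in>S'. x \<noteq> y \<longrightarrow> Q x \<inter> Q y = {}"
    proof (intro ballI impI)
      fix x y assume xy: "x \<in> S'" "y \<in> S'" "x \<noteq> y"
      have n1: "card (Cset x) \<noteq> 1" "card (Cset y) \<noteq> 1" using xy unfolding S'_def by auto
      show "Q x \<inter> Q y = {}"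
      proof (rule ccontr)
        assume "Q x \<inter> Q y \<noteq> {}"
        then obtain B where B: "B \<in> Q x" "B \<in> Q y" by blast
        have "B \<noteq> {}" using Q_prop[OF n1(1)] partition_onD3 B(1) by metis
        then obtain b where bB: "b \<in> B" by blast
        have "B \<subseteq> Cset x" using Q_prop[OF n1(1)] partition_onD1 B(1) by blast
        moreover have "B \<subseteq> Cset y" using Q_prop[OF n1(2)] partition_onD1 B(2) by blast
        ultimately have "(b,x) \<in> E" "(b,y) \<in> E" using bB by (auto simp: Cset_def in_nbrs_def)
        then show False using det xy(3) by blast
      qed
    qed
  qed
  have "(\<Sum>x\<in>S'. card (Q x)) = (\<Sum>x\<in>S'. card (Cset x) div 2)"
  proof (rule sum.cong)
    fix x assume "x \<in> S'"
    then have "card (Cset x) \<noteq> 1" unfolding S'_def by auto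
    then show "card (Q x) = card (Cset x) div 2" using Q_prop by blast
  qed simp
  also have "\<dots> = (\<Sum>x\<in>S. card (Cset x) div 2)"
  proof (rule sum.mono_neutral_left[OF finS])
    show "S' \<subseteq> S" unfolding S'_def by auto
    show "\<forall>i\<in>S - S'. card (Cset i) div 2 = 0" unfolding S'_def by auto
  qed
  finally have "card A = (\<Sum>x\<in>S. card (Cset x) div 2)"
    unfolding A_def using card_image[OF inj] img cardU by simp
  then show "card A = (\<Sum>x \<in> matches V E - sub_vertices V E u. card (Cset x) div 2)"
    unfolding S_def .
qed

end

end

theorem lemma5p12:
  fixes V :: "'a set" and E :: "('a \<times> 'a) set" and u :: 'a
  assumes "se_tournament V E"
    and "card V \<ge> 2"
    and "u \<in> V"
    and "\<not> (\<exists>x \<in> out_nbrs E u. \<exists>a \<in> players V E. in_nbrs E x = {a, u})"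
  shows "\<exists>\<A>. partition_on (players V E - playersOf V E u) \<A> \<and>
           (\<forall>A \<in> \<A>. \<forall>a \<in> A. \<exists>b \<in> A - {a}.
               \<forall>x \<in> matches V E. a \<in> playersOf V E x \<longrightarrow> b \<in> playersOf V E x) \<and>
           card \<A> = (\<Sum>x \<in> matches V E - sub_vertices V E u.
               card (in_nbrs E x \<inter> (players V E - playersOf V E u)) div 2)"
proof -
  interpret tourn2 V E u
    using assms by (unfold_locales) auto
  show ?thesis using main[OF assms(2)] unfolding Dset_def Cset_def .
qed

end
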